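(* Let $G=(V,E)$ be a connected simple graph. Then $G^{(\pi)}$ is a tree for every injection $\pi:V\to\mathbb{N}$ if and only if every biconnected component of $G$ is a clique.
   Context: For a vertex $u$, $N(u)=\{v\in V: uv\in E\}$ is its open neighbourhood. Given an injection $\pi:V\to\mathbb{N}$, an ordered pair $(u,v)\in V^2$ is called good with respect to $\pi$ if $uv\in E$, $\pi(u)<\pi(v)$, and $\pi(u)<\pi(w)$ for every $w\in N(u)\cap N(v)$. The graph $G^{(\pi)}=(V,E^{(\pi)})$ is the spanning subgraph of $G$ with edge set $E^{(\pi)}=\{\{u,v\}: (u,v)\text{ is good with respect to }\pi\}$. A biconnected component (block) of $G$ is a maximal connected subgraph of $G$ that has no cut vertex of its own; a bridge with its endpoints is a biconnected component isomorphic to $K_2$. *)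

theory Defs
  imports Main
begin

definition simple_graph :: "'a set \<Rightarrow> 'a set set \<Rightarrow> bool" where
  "simple_graph V E \<longleftrightarrow> (\<forall>e\<in>E. \<exists>u v. e = {u, v} \<and> u \<noteq> v \<and> u \<in> V \<and> v \<in> V)"

definition nbhd :: "'a set \<Rightarrow> 'a set set \<Rightarrow> 'a \<Rightarrow> 'a set" where
  "nbhd V E u = {v \<in> V. {u, v} \<in> E}"

definition reach :: "'a set set \<Rightarrow> 'a \<Rightarrow> 'a \<Rightarrow> bool" where
  "reach F = (\<lambda>x y. {x, y} \<in> F)\<^sup>*\<^sup>*"

definition connected_graph :: "'a set \<Rightarrow> 'a set set \<Rightarrow> bool" where
  "connected_graph V F \<longleftrightarrow> V \<noteq> {} \<and> (\<forall>u\<in>V. \<forall>v\<in>V. reach F u v)"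

definition has_cycle :: "'a set set \<Rightarrow> bool" where
  "has_cycle F \<longleftrightarrow> (\<exists>xs. length xs \<ge> 3 \<and> distinct xs \<and>
     (\<forall>i < length xs - 1. {xs ! i, xs ! (i + 1)} \<in> F) \<and> {last xs, hd xs} \<in> F)"

definition is_tree :: "'a set \<Rightarrow> 'a set set \<Rightarrow> bool" where
  "is_tree V F \<longleftrightarrow> connected_graph V F \<and> \<not> has_cycle F"

definition good :: "'a set \<Rightarrow> 'a set set \<Rightarrow> ('a \<Rightarrow> nat) \<Rightarrow> 'a \<Rightarrow> 'a \<Rightarrow> bool" where
  "good V E \<pi> u v \<longleftrightarrow> {u, v} \<in> E \<and> \<pi> u < \<pi> v \<and>
     (\<forall>w \<in> nbhd V E u \<inter> nbhd V E v. \<pi> u < \<pi> w)"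

definition pi_edges :: "'a set \<Rightarrow> 'a set set \<Rightarrow> ('a \<Rightarrow> nat) \<Rightarrow> 'a set set" where
  "pi_edges V E \<pi> = {{u, v} | u v. good V E \<pi> u v}"

definition subgraph :: "'a set \<Rightarrow> 'a set set \<Rightarrow> 'a set \<Rightarrow> 'a set set \<Rightarrow> bool" where
  "subgraph W F V E \<longleftrightarrow> W \<subseteq> V \<and> F \<subseteq> E \<and> (\<forall>e\<in>F. e \<subseteq> W)"

definition has_cut_vertex :: "'a set \<Rightarrow> 'a set set \<Rightarrow> bool" where
  "has_cut_vertex W F \<longleftrightarrow> (\<exists>x\<in>W. \<exists>u\<in>W - {x}. \<exists>v\<in>W - {x}.
      \<not> reach {e \<in> F. x \<notin> e} u v)"

definition biconn_candidate :: "'a set \<Rightarrow> 'a set set \<Rightarrow> bool" where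
  "biconn_candidate W F \<longleftrightarrow> connected_graph W F \<and> \<not> has_cut_vertex W F"

definition is_block :: "'a set \<Rightarrow> 'a set set \<Rightarrow> 'a set \<Rightarrow> 'a set set \<Rightarrow> bool" where
  "is_block V E W F \<longleftrightarrow> subgraph W F V E \<and> biconn_candidate W F \<and>
     (\<forall>W' F'. subgraph W' F' V E \<and> biconn_candidate W' F' \<and> W \<subseteq> W' \<and> F \<subseteq> F'
        \<longrightarrow> W' = W \<and> F' = F)"

definition is_clique :: "'a set \<Rightarrow> 'a set set \<Rightarrow> bool" where
  "is_clique W F \<longleftrightarrow> (\<forall>u\<in>W. \<forall>v\<in>W. u \<noteq> v \<longrightarrow> {u, v} \<in> F)"

end

theory Submission imports Defs begin

lemma reach_sym: "reach F x y \<Longrightarrow> reach F y x"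
  unfolding reach_def
proof (induction rule: rtranclp_induct)
  case base then show ?case by simp
next
  case (step y z)
  have "{z,y} \<in> F" using step(2) by (simp add: insert_commute)
  then show ?case using step(3) by (rule converse_rtranclp_into_rtranclp)
qed

lemma reach_edge: "{x,y} \<in> F \<Longrightarrow> reach F x y"
  unfolding reach_def by auto

lemma reach_trans: "reach F x y \<Longrightarrow> reach F y z \<Longrightarrow> reach F x z"
  unfolding reach_def by auto

lemma reach_mono:
  assumes "F \<subseteq> F'" and "reach F x y" shows "reach F' x y"
  using assms(2) unfolding reach_def
proof (induction rule: rtranclp_induct)
  case base then show ?case by simp
next
  case (step y z) then show ?case using assms(1) by (meson rtranclp.rtrancl_into_rtrancl subsetD)
qed

lemma reach_path:
  assumes "reach F x y"
  shows "\<exists>xs. xs \<noteq> [] \<and> hd xs = x \<and> last xs = y \<and> distinct xs \<and> successively (\<lambda>a b. {a,b} \<in> F) xs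
     \<and> (\<forall>z\<in>set xs. z = x \<or> (\<exists>e\<in>F. z \<in> e))"
  using assms unfolding reach_def
proof (induction rule: converse_rtranclp_induct)
  case base
  then show ?case by (intro exI[of _ "[y]"]) auto
next
  case (step x z)
  then obtain xs where xs: "xs \<noteq> []" "hd xs = z" "last xs = y" "distinct xs"
     "successively (\<lambda>a b. {a,b} \<in> F) xs" "\<forall>w\<in>set xs. w = z \<or> (\<exists>e\<in>F. w \<in> e)" by blast
  let ?Q = "\<lambda>xs. xs \<noteq> [] \<and> hd xs = x \<and> last xs = y \<and> distinct xs \<and> successively (\<lambda>a b. {a,b} \<in> F) xs
     \<and> (\<forall>w\<in>set xs. w = x \<or> (\<exists>e\<in>F. w \<in> e))"
  have zin: "\<exists>e\<in>F. z \<in> e" using step(1) by blast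
  show ?case
  proof (cases "x \<in> set xs")
    case True
    then obtain ys zs where yz: "xs = ys @ x # zs" by (meson split_list)
    have "?Q (x # zs)"
    proof (intro conjI)
      show "last (x # zs) = y" using xs(3) yz by simp
      show "distinct (x # zs)" using xs(4) yz by simp
      show "successively (\<lambda>a b. {a,b} \<in> F) (x # zs)" using xs(5) yz by (simp add: successively_append_iff)
      show "\<forall>w\<in>set (x # zs). w = x \<or> (\<exists>e\<in>F. w \<in> e)" using xs(6) yz zin by auto
    qed simp_all
    then show ?thesis by blast
  next
    case False
    have "?Q (x # xs)"
    proof (intro conjI)
      show "last (x # xs) = y" using xs(1,3) by simp
      show "distinct (x # xs)" using xs(4) False by simp
      show "successively (\<lambda>a b. {a,b} \<in> F) (x # xs)" using xs(1,2,5) step(1) by (simp add: successively_Cons)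
      show "\<forall>w\<in>set (x # xs). w = x \<or> (\<exists>e\<in>F. w \<in> e)" using xs(6) zin by auto
    qed simp_all
    then show ?thesis by blast
  qed
qed

lemma sg_edge: "simple_graph V E \<Longrightarrow> {u,v} \<in> E \<Longrightarrow> u \<in> V \<and> v \<in> V \<and> u \<noteq> v"
  unfolding simple_graph_def by (metis doubleton_eq_iff)

lemma good_pi: "good V E \<pi> u v \<Longrightarrow> {u,v} \<in> pi_edges V E \<pi>"
  unfolding pi_edges_def by blast

lemma conn_ord:
  assumes sg: "simple_graph V E" and inj: "inj_on \<pi> V"
    and B: "\<forall>w\<in>B. \<forall>x\<in>V. \<pi> x \<le> \<pi> w"
  shows "{u,v} \<in> E \<Longrightarrow> u \<notin> B \<Longrightarrow> v \<notin> B \<Longrightarrow> \<pi> u < \<pi> v \<Longrightarrow>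
     reach {e \<in> pi_edges V E \<pi>. e \<inter> B = {}} u v"
proof (induction "\<pi> u" arbitrary: u v rule: less_induct)
  case less
  show ?case
  proof (cases "good V E \<pi> u v")
    case True
    have "{u,v} \<in> pi_edges V E \<pi>" using True by (rule good_pi)
    moreover have "{u,v} \<inter> B = {}" using less.prems(2,3) by simp
    ultimately have "{u,v} \<in> {e \<in> pi_edges V E \<pi>. e \<inter> B = {}}" by simp
    then show ?thesis by (rule reach_edge)
  next
    case False
    then obtain w where w: "w \<in> nbhd V E u" "w \<in> nbhd V E v" "\<not> \<pi> u < \<pi> w"
      using less.prems(1,4) unfolding good_def by blast
    have wu: "{w,u} \<in> E" and wv: "{w,v} \<in> E" and wV: "w \<in> V"
      using w(1,2) unfolding nbhd_def by (simp_all add: insert_commute)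
    have "w \<noteq> u" using sg_edge[OF sg wu] by simp
    have uV: "u \<in> V" using sg_edge[OF sg less.prems(1)] by simp
    have "\<pi> w \<noteq> \<pi> u" using inj_on_contraD[OF inj \<open>w \<noteq> u\<close> wV uV] .
    then have lt: "\<pi> w < \<pi> u" using w(3) by linarith
    have "w \<notin> B"
    proof
      assume "w \<in> B"
      then have "\<pi> u \<le> \<pi> w" using B uV by blast
      then show False using lt by linarith
    qed
    have lt2: "\<pi> w < \<pi> v" using lt less.prems(4) by linarith
    have r1: "reach {e \<in> pi_edges V E \<pi>. e \<inter> B = {}} w u"
      using less.hyps[OF lt wu \<open>w \<notin> B\<close> less.prems(2) lt] .
    have r2: "reach {e \<in> pi_edges V E \<pi>. e \<inter> B = {}} w v"
      using less.hyps[OF lt wv \<open>w \<notin> B\<close> less.prems(3) lt2] .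
    show ?thesis using reach_trans[OF reach_sym[OF r1] r2] .
  qed
qed

lemma conn:
  assumes sg: "simple_graph V E" and inj: "inj_on \<pi> V"
    and B: "\<forall>w\<in>B. \<forall>x\<in>V. \<pi> x \<le> \<pi> w"
    and e: "{u,v} \<in> E" "u \<notin> B" "v \<notin> B"
  shows "reach {e \<in> pi_edges V E \<pi>. e \<inter> B = {}} u v"
proof -
  have "u \<in> V" "v \<in> V" "u \<noteq> v" using sg_edge[OF sg e(1)] by auto
  then have "\<pi> u \<noteq> \<pi> v" using inj_on_contraD[OF inj] by blast
  then have "\<pi> u < \<pi> v \<or> \<pi> v < \<pi> u" by linarith
  then show ?thesis
  proof
    assume "\<pi> u < \<pi> v" then show ?thesis using conn_ord[OF sg inj B e] by blast
  next
    assume lt: "\<pi> v < \<pi> u"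
    have "{v,u} \<in> E" using e(1) by (simp add: insert_commute)
    then have "reach {e \<in> pi_edges V E \<pi>. e \<inter> B = {}} v u" using conn_ord[OF sg inj B _ e(3,2) lt] by blast
    then show ?thesis by (rule reach_sym)
  qed
qed

lemma pi_connected:
  assumes sg: "simple_graph V E" and inj: "inj_on \<pi> V" and c: "connected_graph V E"
  shows "connected_graph V (pi_edges V E \<pi>)"
proof -
  have *: "reach (pi_edges V E \<pi>) x y" if "{x,y} \<in> E" for x y
    using conn[OF sg inj, of "{}" x y] that by simp
  have "reach (pi_edges V E \<pi>) u v" if "reach E u v" for u v
    using that unfolding reach_def
  proof (induction rule: rtranclp_induct)
    case base then show ?case by simp
  next
    case (step y z) then show ?case using *[of y z] unfolding reach_def by auto
  qed
  then show ?thesis using c unfolding connected_graph_def by blast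
qed

lemma cycle_from:
  assumes r: "reach {e \<in> P. b \<notin> e} a d" and ad: "a \<noteq> d"
    and ab: "{a,b} \<in> P" and bd: "{b,d} \<in> P" and "b \<noteq> a" "b \<noteq> d"
  shows "has_cycle P"
proof -
  obtain xs where xs: "xs \<noteq> []" "hd xs = a" "last xs = d" "distinct xs"
    "successively (\<lambda>x y. {x,y} \<in> {e \<in> P. b \<notin> e}) xs"
    "\<forall>z\<in>set xs. z = a \<or> (\<exists>e\<in>{e \<in> P. b \<notin> e}. z \<in> e)"
    using reach_path[OF r] by blast
  have bn: "b \<notin> set xs" using xs(6) \<open>b \<noteq> a\<close> by blast
  have l2: "length xs \<ge> 2"
  proof (rule ccontr)
    assume "\<not> ?thesis"
    moreover have "length xs \<noteq> 0" using xs(1) by simp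
    ultimately have "length xs = 1" by linarith
    then obtain x where "xs = [x]" by (metis One_nat_def length_0_conv length_Suc_conv)
    with xs ad show False by simp
  qed
  define ys where "ys = xs @ [b]"
  have s: "successively (\<lambda>x y. {x,y} \<in> P) ys"
    unfolding ys_def using xs(5) xs(1,3) bd
    by (auto simp: successively_append_iff insert_commute elim: successively_mono)
  show ?thesis unfolding has_cycle_def
  proof (intro exI[of _ ys] conjI allI impI)
    show "3 \<le> length ys" using l2 unfolding ys_def by simp
    show "distinct ys" using bn xs(4) unfolding ys_def by simp
    show "{ys ! i, ys ! (i + 1)} \<in> P" if "i < length ys - 1" for i
      using successively_nth[OF s, of i] that by simp
    show "{last ys, hd ys} \<in> P" using ab xs(1,2) unfolding ys_def by (simp add: insert_commute)
  qed
qed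

lemma block_induced:
  assumes blk: "is_block V E W F" and uv: "u \<in> W" "v \<in> W" "{u,v} \<in> E"
  shows "{u,v} \<in> F"
proof (rule ccontr)
  assume nf: "{u,v} \<notin> F"
  define F' where "F' = insert {u,v} F"
  have sub0: "subgraph W F V E" and bc: "biconn_candidate W F" using blk unfolding is_block_def by blast+
  have FF: "F \<subseteq> F'" unfolding F'_def by blast
  have sub: "subgraph W F' V E" using sub0 uv unfolding F'_def subgraph_def by blast
  have "connected_graph W F'"
    unfolding connected_graph_def
  proof (intro conjI ballI)
    show "W \<noteq> {}" using uv by blast
    fix x y assume "x \<in> W" "y \<in> W"
    then have "reach F x y" using bc unfolding biconn_candidate_def connected_graph_def by blast
    then show "reach F' x y" by (rule reach_mono[OF FF])
  qed
  moreover have "\<not> has_cut_vertex W F'"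
  proof
    assume "has_cut_vertex W F'"
    then obtain x u' v' where h: "x \<in> W" "u' \<in> W - {x}" "v' \<in> W - {x}" "\<not> reach {e \<in> F'. x \<notin> e} u' v'"
      unfolding has_cut_vertex_def by blast
    have sb: "{e \<in> F. x \<notin> e} \<subseteq> {e \<in> F'. x \<notin> e}" unfolding F'_def by blast
    have "\<not> reach {e \<in> F. x \<notin> e} u' v'" using h(4) reach_mono[OF sb] by blast
    then have "has_cut_vertex W F" unfolding has_cut_vertex_def using h(1,2,3) by blast
    then show False using bc unfolding biconn_candidate_def by blast
  qed
  ultimately have "biconn_candidate W F'" unfolding biconn_candidate_def by blast
  then have "W = W \<and> F' = F" using blk sub FF unfolding is_block_def by blast
  then show False using nf unfolding F'_def by blast
qed

lemma triple:
  assumes sub: "subgraph W F V E" and r: "reach F u v" and u: "u \<in> W"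
    and nv: "{u,v} \<notin> E" "u \<noteq> v"
  shows "\<exists>b d. b \<in> W \<and> d \<in> W \<and> {u,b} \<in> E \<and> {b,d} \<in> E \<and> {u,d} \<notin> E \<and> u \<noteq> d"
proof -
  have FE: "F \<subseteq> E" and FW: "\<forall>e\<in>F. e \<subseteq> W" using sub unfolding subgraph_def by auto
  have "(\<exists>b d. b \<in> W \<and> d \<in> W \<and> {u,b} \<in> E \<and> {b,d} \<in> E \<and> {u,d} \<notin> E \<and> u \<noteq> d)
        \<or> {u,z} \<in> E \<or> z = u" if "reach F u z" for z
    using that unfolding reach_def
  proof (induction rule: rtranclp_induct)
    case base then show ?case by simp
  next
    case (step y z)
    have yz: "{y,z} \<in> E" "y \<in> W" "z \<in> W" using step(2) FE FW by auto
    from step(3) show ?case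
    proof (elim disjE)
      assume uy: "{u,y} \<in> E"
      show ?thesis
      proof (cases "{u,z} \<in> E \<or> z = u")
        case True then show ?thesis by blast
      next
        case False
        then have "y \<in> W \<and> z \<in> W \<and> {u,y} \<in> E \<and> {y,z} \<in> E \<and> {u,z} \<notin> E \<and> u \<noteq> z"
          using yz uy by auto
        then show ?thesis by blast
      qed
    next
      assume "y = u" then have "{u,z} \<in> E" using yz by simp
      then show ?thesis by blast
    qed simp
  qed
  then show ?thesis using r nv by blast
qed

lemma reach_lift:
  assumes "\<And>x y. {x,y} \<in> F1 \<Longrightarrow> reach F2 x y" and "reach F1 u v"
  shows "reach F2 u v"
  using assms(2) unfolding reach_def
proof (induction rule: rtranclp_induct)
  case base then show ?case by simp
next
  case (step y z) then show ?case using assms(1)[of y z] unfolding reach_def by auto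
qed

lemma nonclique_not_tree:
  assumes fin: "finite V" and sg: "simple_graph V E" and blk: "is_block V E W F"
    and nc: "\<not> is_clique W F"
  shows "\<exists>\<pi>::'a \<Rightarrow> nat. inj_on \<pi> V \<and> \<not> is_tree V (pi_edges V E \<pi>)"
proof -
  have sub: "subgraph W F V E" and bc: "biconn_candidate W F" using blk unfolding is_block_def by auto
  have WV: "W \<subseteq> V" and FE: "F \<subseteq> E" using sub unfolding subgraph_def by auto
  obtain a v where av: "a \<in> W" "v \<in> W" "a \<noteq> v" "{a,v} \<notin> F" using nc unfolding is_clique_def by blast
  have "{a,v} \<notin> E" using block_induced[OF blk av(1,2)] av(4) by blast
  moreover have "reach F a v" using bc av unfolding biconn_candidate_def connected_graph_def by blast
  ultimately obtain b d where bd: "b \<in> W" "d \<in> W" "{a,b} \<in> E" "{b,d} \<in> E" "{a,d} \<notin> E" "a \<noteq> d"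
    using triple[OF sub _ av(1)] av(3) by blast
  have ba: "b \<noteq> a" and bdn: "b \<noteq> d" using sg_edge[OF sg bd(3)] sg_edge[OF sg bd(4)] by auto
  have aV: "a \<in> V" and bV: "b \<in> V" and dV: "d \<in> V" using WV av bd by auto
  have rW: "reach {e \<in> F. b \<notin> e} a d"
    using bc av(1) bd(1,2) ba bdn unfolding biconn_candidate_def has_cut_vertex_def by blast
  obtain f n where f: "f ` V = {i::nat. i < n}" "inj_on f V" using finite_imp_inj_to_nat_seg[OF fin] by blast
  define \<pi> where "\<pi> x = (if x = a then 0 else if x = d then 1 else if x = b then n + 2 else f x + 2)" for x
  have fl: "x \<in> V \<Longrightarrow> f x < n" for x using f(1) by blast
  have inj: "inj_on \<pi> V"
    unfolding inj_on_def \<pi>_def using f(2) fl ba bdn bd(6)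
    by (auto simp: inj_on_eq_iff)
  have mx: "\<forall>w\<in>{b}. \<forall>x\<in>V. \<pi> x \<le> \<pi> w"
    unfolding \<pi>_def using fl ba bdn by (auto simp: less_imp_le_nat)
  have "reach {e \<in> pi_edges V E \<pi>. e \<inter> {b} = {}} a d"
  proof (rule reach_lift[OF _ rW])
    fix x y assume "{x,y} \<in> {e \<in> F. b \<notin> e}"
    then show "reach {e \<in> pi_edges V E \<pi>. e \<inter> {b} = {}} x y"
      using conn[OF sg inj mx, of x y] FE by auto
  qed
  moreover have "{e \<in> pi_edges V E \<pi>. e \<inter> {b} = {}} = {e \<in> pi_edges V E \<pi>. b \<notin> e}" by auto
  ultimately have r: "reach {e \<in> pi_edges V E \<pi>. b \<notin> e} a d" by simp
  have nl: "{x} \<notin> E" for x using sg_edge[OF sg, of x x] by auto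
  have g1: "good V E \<pi> a b"
    unfolding good_def nbhd_def \<pi>_def using bd(3) ba nl by auto
  have g2: "good V E \<pi> d b"
    unfolding good_def nbhd_def \<pi>_def using bd(4,5) ba bdn bd(6) nl
    by (auto simp: insert_commute)
  have "has_cycle (pi_edges V E \<pi>)"
    using cycle_from[OF r bd(6) good_pi[OF g1] _ ba bdn] good_pi[OF g2] by (simp add: insert_commute)
  then show ?thesis using inj unfolding is_tree_def by blast
qed

lemma mod_ne:
  fixes k j n :: nat
  assumes "k < n" "0 < j" "j < n"
  shows "(k + j) mod n \<noteq> k"
proof
  assume h: "(k + j) mod n = k"
  have "k + j = (k + j) div n * n + (k + j) mod n" by simp
  then have "j = (k + j) div n * n" using h by linarith
  show False
  proof (cases "(k + j) div n = 0")
    case True then show False using \<open>j = (k + j) div n * n\<close> assms(2) by simp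
  next
    case False
    then have "1 * n \<le> (k + j) div n * n" by (intro mult_le_mono1) simp
    then show False using \<open>j = (k + j) div n * n\<close> assms(3) by linarith
  qed
qed

lemma has_cycle_mod:
  assumes "has_cycle P"
  shows "\<exists>xs. 3 \<le> length xs \<and> distinct xs \<and> (\<forall>i<length xs. {xs!i, xs!(Suc i mod length xs)} \<in> P)
            \<and> {xs!0, xs!1} \<in> P \<and> {xs!1, xs!2} \<in> P \<and> {xs!(length xs - 1), xs!0} \<in> P"
proof -
  obtain xs where xs: "length xs \<ge> 3" "distinct xs" "\<forall>i < length xs - 1. {xs ! i, xs ! (i + 1)} \<in> P"
    "{last xs, hd xs} \<in> P" using assms unfolding has_cycle_def by blast
  have ne: "xs \<noteq> []" using xs(1) by auto
  have *: "{xs!i, xs!(Suc i mod length xs)} \<in> P" if "i < length xs" for i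
  proof (cases "i < length xs - 1")
    case True then show ?thesis using xs(3) by simp
  next
    case False
    then have "i = length xs - 1" using that by simp
    then show ?thesis using xs(4) ne by (simp add: last_conv_nth hd_conv_nth)
  qed
  have all: "\<forall>i<length xs. {xs!i, xs!(Suc i mod length xs)} \<in> P" using * by blast
  have e0: "{xs!0, xs!1} \<in> P" using *[of 0] xs(1) ne by simp
  have e1: "{xs!1, xs!2} \<in> P" using *[of 1] xs(1) ne by (simp add: numeral_2_eq_2)
  have e2: "{xs!(length xs - 1), xs!0} \<in> P" using *[of "length xs - 1"] xs(1) ne by simp
  show ?thesis using xs(1,2) all e0 e1 e2 by blast
qed

lemma cycle_nocut:
  assumes n3: "3 \<le> length xs" and d: "distinct xs"
  defines "Fc \<equiv> {{xs!i, xs!(Suc i mod length xs)} | i. i < length xs}"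
  shows "\<not> has_cut_vertex (set xs) Fc"
proof
  let ?n = "length xs"
  assume "has_cut_vertex (set xs) Fc"
  then obtain x u v where x: "x \<in> set xs" "u \<in> set xs - {x}" "v \<in> set xs - {x}"
    and nr: "\<not> reach {e \<in> Fc. x \<notin> e} u v" unfolding has_cut_vertex_def by blast
  obtain k where k: "k < ?n" "xs!k = x" using x(1) by (auto simp: in_set_conv_nth)
  let ?R = "{e \<in> Fc. x \<notin> e}"
  have neq: "xs!((k+j) mod ?n) \<noteq> x" if "0 < j" "j < ?n" for j
  proof
    assume "xs!((k+j) mod ?n) = x"
    moreover have "(k+j) mod ?n < ?n" using n3 by (intro mod_less_divisor) linarith
    ultimately show False using k nth_eq_iff_index_eq[OF d, of "(k+j) mod ?n" k] mod_ne[OF k(1) that] by simp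
  qed
  have step: "reach ?R (xs!((k+1) mod ?n)) (xs!((k+j) mod ?n))" if "1 \<le> j" "j < ?n" for j
    using that
  proof (induction j rule: dec_induct)
    case base then show ?case unfolding reach_def by simp
  next
    case (step j)
    let ?i = "(k+j) mod ?n"
    have "?i < ?n" using n3 by (intro mod_less_divisor) linarith
    then have e: "{xs!?i, xs!(Suc ?i mod ?n)} \<in> Fc" unfolding Fc_def by blast
    have m: "Suc ?i mod ?n = (k + Suc j) mod ?n" unfolding add_Suc_right by (rule mod_Suc_eq)
    have j1: "0 < j" "j < ?n" using step.hyps step.prems by linarith+
    have j2: "0 < Suc j" "Suc j < ?n" using step.prems by linarith+
    have n1: "xs!?i \<noteq> x" using neq[OF j1] .
    have n2: "xs!((k + Suc j) mod ?n) \<noteq> x" using neq[OF j2] .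
    have "{xs!?i, xs!((k + Suc j) mod ?n)} \<in> Fc" using e unfolding m .
    then have "{xs!?i, xs!((k + Suc j) mod ?n)} \<in> ?R" using n1 n2 by blast
    then have "reach ?R (xs!?i) (xs!((k + Suc j) mod ?n))" by (rule reach_edge)
    moreover have "reach ?R (xs!((k+1) mod ?n)) (xs!?i)" using step.IH j1(2) by blast
    ultimately show ?case by (rule reach_trans[rotated])
  qed
  have all: "reach ?R (xs!((k+1) mod ?n)) w" if "w \<in> set xs - {x}" for w
  proof -
    have "w \<in> set xs" using that by simp
    then obtain i where i: "i < ?n" "xs!i = w" by (auto simp: in_set_conv_nth)
    have "i \<noteq> k" using i k that by auto
    define j where "j = (if k < i then i - k else i + ?n - k)"
    have j: "1 \<le> j" "j < ?n" using \<open>i \<noteq> k\<close> i k unfolding j_def by auto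
    have "(k + j) mod ?n = i"
    proof (cases "k < i")
      case True then show ?thesis using i unfolding j_def by simp
    next
      case False
      then have "k + j = i + ?n" unfolding j_def using k by simp
      then show ?thesis using i by simp
    qed
    then show ?thesis using step[OF j] i by simp
  qed
  have "reach ?R u v" using reach_trans[OF reach_sym[OF all[OF x(2)]] all[OF x(3)]] .
  then show False using nr by blast
qed

lemma cycle_candidate:
  assumes n3: "3 \<le> length xs" and d: "distinct xs"
  defines "Fc \<equiv> {{xs!i, xs!(Suc i mod length xs)} | i. i < length xs}"
  shows "biconn_candidate (set xs) Fc"
proof -
  have nc: "\<not> has_cut_vertex (set xs) Fc" using cycle_nocut[OF n3 d] unfolding Fc_def .
  have "reach Fc u v" if "u \<in> set xs" "v \<in> set xs" for u v
  proof (cases "u = v")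
    case True then show ?thesis unfolding reach_def by simp
  next
    case False
    have "card (set xs) \<ge> 3" using n3 d by (simp add: distinct_card)
    moreover have "card (set xs) \<le> 2" if "set xs \<subseteq> {u, v}"
    proof -
      have "card (set xs) \<le> card {u,v}" using that by (intro card_mono) auto
      also have "\<dots> \<le> 2" by (cases "u = v") auto
      finally show ?thesis .
    qed
    ultimately have "\<not> set xs \<subseteq> {u, v}" by linarith
    then obtain x where "x \<in> set xs" "x \<noteq> u" "x \<noteq> v" by blast
    then have "reach {e \<in> Fc. x \<notin> e} u v" using nc that unfolding has_cut_vertex_def by blast
    then show ?thesis by (rule reach_mono[rotated]) auto
  qed
  moreover have "set xs \<noteq> {}" using n3 by auto
  ultimately show ?thesis using nc unfolding biconn_candidate_def connected_graph_def by blast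
qed

lemma pi_sub: "pi_edges V E \<pi> \<subseteq> E"
  unfolding pi_edges_def good_def by auto

lemma clique_edge_min:
  assumes sg: "simple_graph V E" and blk: "is_block V E W F" and cl: "is_clique W F"
    and e: "{p,q} \<in> pi_edges V E \<pi>" and pq: "p \<in> W" "q \<in> W"
  shows "\<exists>r\<in>{p,q}. \<forall>w\<in>W - {r}. \<pi> r < \<pi> w"
proof -
  obtain u v where uv: "{p,q} = {u,v}" "good V E \<pi> u v" using e unfolding pi_edges_def by blast
  have uW: "u \<in> W" "v \<in> W" using uv(1) pq by (auto simp: doubleton_eq_iff)
  have WV: "W \<subseteq> V" and FE: "F \<subseteq> E" using blk unfolding is_block_def subgraph_def by auto
  have "\<pi> u < \<pi> w" if "w \<in> W - {u}" for w
  proof (cases "w = v")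
    case True then show ?thesis using uv(2) unfolding good_def by simp
  next
    case False
    then have "{u,w} \<in> E" "{v,w} \<in> E" using cl FE that uW unfolding is_clique_def by auto
    then have "w \<in> nbhd V E u \<inter> nbhd V E v" using WV that unfolding nbhd_def by auto
    then show ?thesis using uv(2) unfolding good_def by blast
  qed
  then show ?thesis using uv(1) by blast
qed

lemma block_graph_acyclic:
  assumes fin: "finite V" and sg: "simple_graph V E"
    and cl: "\<forall>W F. is_block V E W F \<longrightarrow> is_clique W F"
  shows "\<not> has_cycle (pi_edges V E \<pi>)"
proof
  let ?P = "pi_edges V E \<pi>"
  assume "has_cycle ?P"
  then obtain xs where xs: "3 \<le> length xs" "distinct xs"
    "\<forall>i<length xs. {xs!i, xs!(Suc i mod length xs)} \<in> ?P"
    "{xs!0, xs!1} \<in> ?P" "{xs!1, xs!2} \<in> ?P" "{xs!(length xs - 1), xs!0} \<in> ?P"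
    using has_cycle_mod by blast
  define Fc where "Fc = {{xs!i, xs!(Suc i mod length xs)} | i. i < length xs}"
  have FcE: "Fc \<subseteq> E" using xs(3) pi_sub unfolding Fc_def by blast
  have xsV: "set xs \<subseteq> V"
  proof
    fix z assume "z \<in> set xs"
    then obtain i where i: "i < length xs" "xs!i = z" by (meson in_set_conv_nth)
    then have "{z, xs!(Suc i mod length xs)} \<in> E" using xs(3) pi_sub by blast
    then show "z \<in> V" using sg_edge[OF sg] by blast
  qed
  have EP: "E \<subseteq> Pow V" using sg unfolding simple_graph_def by auto
  have finE: "finite E" using finite_subset[OF EP] fin by simp
  have inset: "xs!(Suc i mod length xs) \<in> set xs" if "i < length xs" for i
    using that by (intro nth_mem mod_less_divisor) linarith
  have sub0: "subgraph (set xs) Fc V E" unfolding subgraph_def Fc_def using xsV FcE Fc_def inset by auto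
  define S where "S = (\<lambda>(W, F). subgraph W F V E \<and> biconn_candidate W F \<and> set xs \<subseteq> W \<and> Fc \<subseteq> F)"
  have S0: "S (set xs, Fc)" unfolding S_def using sub0 cycle_candidate[OF xs(1,2)] Fc_def by simp
  have bnd: "\<forall>y. S y \<longrightarrow> (\<lambda>(W, F). card W + card F) y < card V + card E + 1"
  proof (intro allI impI)
    fix y assume "S y"
    then obtain W F where y: "y = (W, F)" "W \<subseteq> V" "F \<subseteq> E" unfolding S_def subgraph_def by auto
    have "card W \<le> card V" "card F \<le> card E" using y fin finE by (auto intro: card_mono)
    then show "(\<lambda>(W, F). card W + card F) y < card V + card E + 1" using y by simp
  qed
  obtain W F where WF: "S (W, F)" and mx: "\<forall>y. S y \<longrightarrow> (\<lambda>(W, F). card W + card F) y \<le> card W + card F"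
    using Lattices_Big.ex_has_greatest_nat[OF S0 bnd] by fastforce
  have blk: "is_block V E W F"
    unfolding is_block_def
  proof (intro conjI allI impI)
    show "subgraph W F V E" "biconn_candidate W F" using WF unfolding S_def by auto
    fix W' F' assume h: "subgraph W' F' V E \<and> biconn_candidate W' F' \<and> W \<subseteq> W' \<and> F \<subseteq> F'"
    then have "S (W', F')" using WF unfolding S_def by auto
    then have le: "card W' + card F' \<le> card W + card F" using mx by fastforce
    have fW: "finite W'" and fF: "finite F'" using h fin finE unfolding subgraph_def
      by (auto intro: finite_subset)
    have "card W \<le> card W'" "card F \<le> card F'" using h fW fF by (auto intro: card_mono)
    then have "card W = card W'" "card F = card F'" using le by auto
    then show "W' = W" "F' = F" using h fW fF card_subset_eq by metis+
  qed
  have clq: "is_clique W F" using cl blk by blast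
  have xW: "set xs \<subseteq> W" using WF unfolding S_def by auto
  let ?n = "length xs"
  have inW: "xs!i \<in> W" if "i < ?n" for i using xW that by auto
  have i0: "xs!0 \<in> W" "xs!1 \<in> W" "xs!2 \<in> W" "xs!(?n - 1) \<in> W"
  proof -
    have "0 < ?n" "1 < ?n" "2 < ?n" "?n - 1 < ?n" using xs(1) by linarith+
    then show "xs!0 \<in> W" "xs!1 \<in> W" "xs!2 \<in> W" "xs!(?n - 1) \<in> W" using inW by blast+
  qed
  define sm where "sm r \<longleftrightarrow> (\<forall>w\<in>W - {r}. \<pi> r < \<pi> w)" for r
  have uniq: "r1 = r2" if "sm r1" "sm r2" "r1 \<in> W" "r2 \<in> W" for r1 r2
    using that unfolding sm_def by (metis DiffI less_asym singletonD)
  obtain r1 where r1: "r1 \<in> {xs!0, xs!1}" "sm r1"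
    using clique_edge_min[OF sg blk clq xs(4) i0(1,2)] unfolding sm_def by blast
  obtain r2 where r2: "r2 \<in> {xs!1, xs!2}" "sm r2"
    using clique_edge_min[OF sg blk clq xs(5) i0(2,3)] unfolding sm_def by blast
  obtain r3 where r3: "r3 \<in> {xs!(?n - 1), xs!0}" "sm r3"
    using clique_edge_min[OF sg blk clq xs(6) i0(4,1)] unfolding sm_def by blast
  have W1: "r1 \<in> W" "r2 \<in> W" "r3 \<in> W" using r1(1) r2(1) r3(1) i0 by auto
  have e12: "r1 = r2" "r1 = r3" using uniq r1 r2 r3 W1 by auto
  have L: "0 < ?n" "1 < ?n" "2 < ?n" "?n - 1 < ?n" "?n - 1 \<noteq> 1" "?n - 1 \<noteq> 0" using xs(1) by linarith+
  have d: "xs!0 \<noteq> xs!1" "xs!0 \<noteq> xs!2" "xs!1 \<noteq> xs!2" "xs!1 \<noteq> xs!(?n-1)" "xs!0 \<noteq> xs!(?n-1)"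
    using nth_eq_iff_index_eq[OF xs(2), of 0 1] nth_eq_iff_index_eq[OF xs(2), of 0 2]
      nth_eq_iff_index_eq[OF xs(2), of 1 2] nth_eq_iff_index_eq[OF xs(2), of 1 "?n-1"]
      nth_eq_iff_index_eq[OF xs(2), of 0 "?n-1"] L by auto
  show False using r1(1) r2(1) r3(1) e12 d by auto
qed

theorem lemma2:
  fixes V :: "'a set" and E :: "'a set set"
  assumes "finite V" and "simple_graph V E" and "connected_graph V E"
  shows "(\<forall>\<pi> :: 'a \<Rightarrow> nat. inj_on \<pi> V \<longrightarrow> is_tree V (pi_edges V E \<pi>))
     \<longleftrightarrow> (\<forall>W F. is_block V E W F \<longrightarrow> is_clique W F)"
proof
  assume "\<forall>\<pi> :: 'a \<Rightarrow> nat. inj_on \<pi> V \<longrightarrow> is_tree V (pi_edges V E \<pi>)"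
  then show "\<forall>W F. is_block V E W F \<longrightarrow> is_clique W F"
    using nonclique_not_tree[OF assms(1,2)] by blast
next
  assume "\<forall>W F. is_block V E W F \<longrightarrow> is_clique W F"
  then show "\<forall>\<pi> :: 'a \<Rightarrow> nat. inj_on \<pi> V \<longrightarrow> is_tree V (pi_edges V E \<pi>)"
    using block_graph_acyclic[OF assms(1,2)] pi_connected[OF assms(2) _ assms(3)]
    unfolding is_tree_def by blast
qed

end
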